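(* Let $T$ be the operator on $H^2$ given by $Tf=\sum_{m=0}^\infty\left(\sum_{n=0}^\infty n!\,\hat f(n+m)\right)z^m$, with domain $D(T)=\{f\in H^2: Tf\in H^2\}$ (i.e. those $f$ for which every inner series converges and the resulting coefficient sequence is square summable). Then every function $f\in D(T)$ is an entire function and can be written as $f(z)=\sum_{n=0}^\infty a_n\frac{z^n}{n!}$ where $\sum_{n=0}^\infty a_n$ converges.
   Context: $H^2$ is the Hardy space of analytic functions $f(z)=\sum_{n\ge0}\hat f(n)z^n$ on the unit disc with $\sum|\hat f(n)|^2<\infty$. *)

theory Defs
  imports "HOL-Complex_Analysis.Complex_Analysis"
begin

definition fhat :: "(complex \<Rightarrow> complex) \<Rightarrow> nat \<Rightarrow> complex" where
  "fhat f n = (deriv ^^ n) f 0 / of_nat (fact n)"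

definition H2 :: "(complex \<Rightarrow> complex) set" where
  "H2 = {f. f holomorphic_on ball 0 1 \<and> summable (\<lambda>n. (norm (fhat f n))^2)}"

definition Tcoeff :: "(complex \<Rightarrow> complex) \<Rightarrow> nat \<Rightarrow> complex" where
  "Tcoeff f m = (\<Sum>n. of_nat (fact n) * fhat f (n + m))"

definition domT :: "(complex \<Rightarrow> complex) set" where
  "domT = {f \<in> H2. (\<forall>m. summable (\<lambda>n. of_nat (fact n) * fhat f (n + m)))
                   \<and> summable (\<lambda>m. (norm (Tcoeff f m))^2)}"

end

theory Submission
  imports Defs
begin

theorem theorem3:
  assumes "f \<in> domT"
  shows "\<exists>g a. g holomorphic_on UNIV \<and> (\<forall>z\<in>ball 0 1. g z = f z)
           \<and> summable (a :: nat \<Rightarrow> complex)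
           \<and> (\<forall>z. (\<lambda>n. a n * z ^ n / of_nat (fact n)) sums g z)"
proof -
  define c where "c = fhat f"
  define a where "a = (\<lambda>n. of_nat (fact n) * c n :: complex)"
  have hol: "f holomorphic_on ball 0 1" using assms by (auto simp: domT_def H2_def)
  have sa: "summable a"
  proof -
    have "summable (\<lambda>n. of_nat (fact n) * fhat f (n + 0))" using assms unfolding domT_def by blast
    then show ?thesis by (simp add: a_def c_def)
  qed
  then have "a \<longlonglongrightarrow> 0" by (rule summable_LIMSEQ_zero)
  then have "Bseq a" using convergent_imp_Bseq convergentI by blast
  then obtain M where M: "M > 0" "\<And>n. norm (a n) \<le> M" by (auto simp: Bseq_def)
  have ac: "a n / of_nat (fact n) = c n" for n
    by (simp add: a_def)
  have summ: "summable (\<lambda>n. c n * z ^ n)" for z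
  proof (rule summable_comparison_test)
    show "summable (\<lambda>n. M * (norm z ^ n / fact n))"
      using summable_exp_generic[of "norm z"] by (intro summable_mult) (simp add: divide_inverse mult.commute)
    show "\<exists>N. \<forall>n\<ge>N. norm (c n * z ^ n) \<le> M * (norm z ^ n / fact n)"
    proof (intro exI allI impI)
      fix n :: nat
      have "norm (c n * z ^ n) = norm (a n) * norm z ^ n / fact n"
        by (simp add: ac[symmetric] norm_mult norm_divide norm_power)
      also have "\<dots> \<le> M * norm z ^ n / fact n"
        by (intro divide_right_mono mult_right_mono M) auto
      finally show "norm (c n * z ^ n) \<le> M * (norm z ^ n / fact n)" by simp
    qed
  qed
  define g where "g z = (\<Sum>n. c n * z ^ n)" for z
  have gs: "(\<lambda>n. c n * z ^ n) sums g z" for z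
    using summ[of z] by (simp add: g_def summable_sums)
  have gh: "g holomorphic_on ball 0 R" for R
    by (rule power_series_holomorphic[where a=c]) (use gs in simp)
  have "g holomorphic_on UNIV"
    unfolding holomorphic_on_def
  proof
    fix z :: complex
    have "g field_differentiable at z"
      by (rule holomorphic_on_imp_differentiable_at[OF gh[of "norm z + 1"]]) auto
    then show "g field_differentiable at z within UNIV" by simp
  qed
  moreover have "\<forall>z\<in>ball 0 1. g z = f z"
  proof
    fix z :: complex assume z: "z \<in> ball 0 1"
    have "(\<lambda>n. (deriv ^^ n) f 0 / fact n * (z - 0) ^ n) sums f z"
      by (rule holomorphic_power_series[OF hol z])
    then have "(\<lambda>n. c n * z ^ n) sums f z" by (simp add: c_def fhat_def)
    then show "g z = f z" using gs[of z] sums_unique2 by blast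
  qed
  moreover have "\<forall>z. (\<lambda>n. a n * z ^ n / of_nat (fact n)) sums g z"
  proof
    fix z
    have "(\<lambda>n. a n * z ^ n / of_nat (fact n)) = (\<lambda>n. c n * z ^ n)"
      by (rule ext) (simp add: ac[symmetric])
    then show "(\<lambda>n. a n * z ^ n / of_nat (fact n)) sums g z" using gs by simp
  qed
  ultimately show ?thesis using sa by blast
qed

end
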